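(* Let $n=2$, $d\ge 225\log 6$, $\sigma_1^2=3$, $\sigma_2^2=1$, and let $\bar\Theta_\kappa=\{\boldsymbol\theta\in(\mathbb R^d)^2:\ \bar\kappa(\boldsymbol\theta,\boldsymbol\sigma)\ge\kappa\}$. If $\kappa<0.1(2d)^{1/2}$, then $$\sup_{\boldsymbol\theta\in\bar\Theta_\kappa}\mathbf P_{\boldsymbol\theta,\boldsymbol\sigma,id}(\pi^{\mathrm{gr}}\ne id)\ge\frac12,$$ where $id$ is the identity permutation.
   Context: Model: integers $n\ge2$, $d\ge1$. Unknown parameters: $\boldsymbol\theta=(\theta_1,\dots,\theta_n)$ with $\theta_i\in\mathbb R^d$, noise levels $\boldsymbol\sigma=(\sigma_1,\dots,\sigma_n)$ with $\sigma_i>0$, and a permutation $\pi^*\in\mathfrak S_n$. One observes $X_i=\theta_i+\sigma_i\xi_i$, $X_i^\#=\theta_{\pi^*(i)}+\sigma_i^\#\xi_i^\#$, $i=1,\dots,n$, where $\sigma_i^\#=\sigma_{\pi^*(i)}$ and $\xi_1,\dots,\xi_n,\xi_1^\#,\dots,\xi_n^\#$ are i.i.d. $\mathcal N(0,I_d)$. The law of the data is $\mathbf P_{\boldsymbol\theta,\boldsymbol\sigma,\pi^*}$. Greedy estimator: $\pi^{\mathrm{gr}}(1)=\arg\min_{j\in\{1,\dots,n\}}\|X_j-X_1^\#\|$ and recursively, for $i\ge2$, $\pi^{\mathrm{gr}}(i)=\arg\min_{j\notin\{\pi^{\mathrm{gr}}(1),\dots,\pi^{\mathrm{gr}}(i-1)\}}\|X_j-X_i^\#\|$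 (ties broken arbitrarily). Relative separation distance: $\bar\kappa(\boldsymbol\theta,\boldsymbol\sigma)=\min_{i\ne j}\frac{\|\theta_i-\theta_j\|}{(\sigma_i^2+\sigma_j^2)^{1/2}}$. *)

theory Defs
  imports "HOL-Probability.Probability"
begin

text \<open>Indices are 0-based: the paper's index i in 1..n corresponds to i-1 in 0..<n.
  Vectors in R^d are elements of real^'d, with d = CARD('d).\<close>

text \<open>Underlying probability space: i.i.d. standard Gaussian coordinates
  omega (i, b, k), i < n, b = False for xi_i and b = True for xi_i^#, k a coordinate.\<close>
definition noise_space :: "nat \<Rightarrow> (nat \<times> bool \<times> 'd::finite \<Rightarrow> real) measure" where
  "noise_space n = PiM ({..<n} \<times> (UNIV :: bool set) \<times> (UNIV :: 'd set))
                        (\<lambda>_. density lborel std_normal_density)"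

definition xi :: "(nat \<times> bool \<times> 'd::finite \<Rightarrow> real) \<Rightarrow> nat \<Rightarrow> real^'d" where
  "xi \<omega> i = (\<chi> k. \<omega> (i, False, k))"

definition xi_sharp :: "(nat \<times> bool \<times> 'd::finite \<Rightarrow> real) \<Rightarrow> nat \<Rightarrow> real^'d" where
  "xi_sharp \<omega> i = (\<chi> k. \<omega> (i, True, k))"

definition obsX :: "(nat \<Rightarrow> real^'d::finite) \<Rightarrow> (nat \<Rightarrow> real) \<Rightarrow>
    (nat \<times> bool \<times> 'd \<Rightarrow> real) \<Rightarrow> nat \<Rightarrow> real^'d" where
  "obsX \<theta> \<sigma> \<omega> i = \<theta> i + \<sigma> i *\<^sub>R xi \<omega> i"

definition obsXs :: "(nat \<Rightarrow> real^'d::finite) \<Rightarrow> (nat \<Rightarrow> real) \<Rightarrow> (nat \<Rightarrow> nat) \<Rightarrow>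
    (nat \<times> bool \<times> 'd \<Rightarrow> real) \<Rightarrow> nat \<Rightarrow> real^'d" where
  "obsXs \<theta> \<sigma> \<pi> \<omega> i = \<theta> (\<pi> i) + \<sigma> (\<pi> i) *\<^sub>R xi_sharp \<omega> i"

definition Prob :: "nat \<Rightarrow> (nat \<Rightarrow> real^'d::finite) \<Rightarrow> (nat \<Rightarrow> real) \<Rightarrow> (nat \<Rightarrow> nat) \<Rightarrow>
    ((nat \<Rightarrow> real^'d) \<Rightarrow> (nat \<Rightarrow> real^'d) \<Rightarrow> bool) \<Rightarrow> real" where
  "Prob n \<theta> \<sigma> \<pi> E = measure (noise_space n)
     {\<omega> \<in> space (noise_space n). E (obsX \<theta> \<sigma> \<omega>) (obsXs \<theta> \<sigma> \<pi> \<omega>)}"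

text \<open>Greedy estimator; ties broken by smallest index.  gr_prefix X Xs n i lists
  pi_gr(0), ..., pi_gr(i-1).\<close>
fun gr_prefix :: "(nat \<Rightarrow> real^'d::finite) \<Rightarrow> (nat \<Rightarrow> real^'d) \<Rightarrow> nat \<Rightarrow> nat \<Rightarrow> nat list" where
  "gr_prefix X Xs n 0 = []"
| "gr_prefix X Xs n (Suc i) =
     (let U = set (gr_prefix X Xs n i) in
      gr_prefix X Xs n i @
        [LEAST j. j \<in> {..<n} - U \<and> (\<forall>j' \<in> {..<n} - U. norm (X j - Xs i) \<le> norm (X j' - Xs i))])"

definition greedy :: "(nat \<Rightarrow> real^'d::finite) \<Rightarrow> (nat \<Rightarrow> real^'d) \<Rightarrow> nat \<Rightarrow> nat \<Rightarrow> nat" where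
  "greedy X Xs n i = (if i < n then gr_prefix X Xs n n ! i else i)"

definition kappa_bar :: "nat \<Rightarrow> (nat \<Rightarrow> real^'d::finite) \<Rightarrow> (nat \<Rightarrow> real) \<Rightarrow> real" where
  "kappa_bar n \<theta> \<sigma> = Min {norm (\<theta> i - \<theta> j) / sqrt ((\<sigma> i)\<^sup>2 + (\<sigma> j)\<^sup>2) | i j. i < n \<and> j < n \<and> i \<noteq> j}"

end

theory Submission
  imports Defs
begin


definition NN :: "real measure" where "NN = density lborel std_normal_density"

lemma prob_NN: "prob_space NN"
  unfolding NN_def by (rule prob_space_normal_density) simp

lemma NN_int_iff: "g \<in> borel_measurable borel \<Longrightarrow> integrable NN g \<longleftrightarrow> integrable lborel (\<lambda>x. std_normal_density x * g x)"
  unfolding NN_def by (subst integrable_density) (auto simp: normal_density_nonneg)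

lemma NN_integral: "g \<in> borel_measurable borel \<Longrightarrow> integral\<^sup>L NN g = (\<integral>x. std_normal_density x * g x \<partial>lborel)"
  unfolding NN_def by (subst integral_density) (auto simp: normal_density_nonneg)

lemma mom_int: "integrable NN (\<lambda>x. x ^ k)"
  by (subst NN_int_iff) (auto intro: integrable_std_normal_moment)

lemma mom1: "integral\<^sup>L NN (\<lambda>x. x) = 0"
  using integral_std_normal_moment_odd[of 0] by (subst NN_integral) auto

lemma mom2: "integral\<^sup>L NN (\<lambda>x. x^2) = 1"
  using integral_std_normal_moment_even[of 1] by (subst NN_integral) auto

lemma mom4: "integral\<^sup>L NN (\<lambda>x. x^4) = 3"
proof -
  have "integral\<^sup>L lborel (\<lambda>x. std_normal_density x * x^(2*2)) = fact (2 * 2) / (2^2 * fact 2)"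
    by (rule integral_std_normal_moment_even)
  also have "\<dots> = 3" by (simp add: fact_numeral)
  finally show ?thesis by (subst NN_integral) auto
qed

lemma id_int: "integrable NN (\<lambda>x. x)"
  using mom_int[of 1] by simp

lemma sq_int: "integrable NN (\<lambda>x. x^2)"
  using mom_int[of 2] by simp

lemma one_int: "integrable NN (\<lambda>x. 1::real)"
  using mom_int[of 0] by simp

lemma one_integral: "integral\<^sup>L NN (\<lambda>x. 1::real) = 1"
  using prob_space.prob_space[OF prob_NN] by (simp add: prob_space.prob_space)

lemma c_int: "integrable NN (\<lambda>x. x^2 - 1)"
  using sq_int one_int by auto

lemma c_integral: "integral\<^sup>L NN (\<lambda>x. x^2 - 1) = 0"
  using sq_int one_int mom2 one_integral by (simp add: Bochner_Integration.integral_diff)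

lemma c2_int: "integrable NN (\<lambda>x. (x^2 - 1)^2)"
proof -
  have "(\<lambda>x::real. (x^2 - 1)^2) = (\<lambda>x. x^4 - 2 * x^2 + 1)"
    by (rule ext) (simp add: power2_eq_square algebra_simps power4_eq_xxxx)
  then show ?thesis using mom_int[of 4] sq_int one_int by auto
qed

lemma c2_integral: "integral\<^sup>L NN (\<lambda>x. (x^2 - 1)^2) = 2"
proof -
  have "(\<lambda>x::real. (x^2 - 1)^2) = (\<lambda>x. (x^4 - 2 * x^2) + 1)"
    by (rule ext) (simp add: power2_eq_square algebra_simps power4_eq_xxxx)
  then show ?thesis using mom_int[of 4] sq_int one_int mom4 mom2 one_integral
    by (simp add: Bochner_Integration.integral_diff Bochner_Integration.integral_add)
qed


lemma prodint:
  fixes g :: "'i \<Rightarrow> real \<Rightarrow> real"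
  assumes fin: "finite I" and S: "S \<subseteq> I" and ig: "\<And>j. j\<in>S \<Longrightarrow> integrable NN (g j)"
  shows "integrable (PiM I (\<lambda>_. NN)) (\<lambda>\<omega>. \<Prod>j\<in>S. g j (\<omega> j))"
    and "integral\<^sup>L (PiM I (\<lambda>_. NN)) (\<lambda>\<omega>. \<Prod>j\<in>S. g j (\<omega> j)) = (\<Prod>j\<in>S. integral\<^sup>L NN (g j))"
proof -
  interpret product_prob_space "\<lambda>_. NN" I
    using prob_NN by (simp add: product_prob_space_def product_prob_space_axioms_def
        product_sigma_finite_def prob_space_imp_sigma_finite)
  define g' where "g' j = (if j \<in> S then g j else (\<lambda>_. 1))" for j
  have ig': "integrable NN (g' j)" for j
    using ig one_int by (auto simp: g'_def)
  have eq: "(\<Prod>j\<in>I. g' j (\<omega> j)) = (\<Prod>j\<in>S. g j (\<omega> j))" for \<omega>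
  proof -
    have "(\<Prod>j\<in>I. g' j (\<omega> j)) = (\<Prod>j\<in>S. g' j (\<omega> j))"
      using fin S by (intro prod.mono_neutral_right) (auto simp: g'_def)
    also have "\<dots> = (\<Prod>j\<in>S. g j (\<omega> j))" by (intro prod.cong) (auto simp: g'_def)
    finally show ?thesis .
  qed
  have eq2: "(\<Prod>j\<in>I. integral\<^sup>L NN (g' j)) = (\<Prod>j\<in>S. integral\<^sup>L NN (g j))"
  proof -
    have "(\<Prod>j\<in>I. integral\<^sup>L NN (g' j)) = (\<Prod>j\<in>S. integral\<^sup>L NN (g' j))"
      using fin S one_integral by (intro prod.mono_neutral_right) (auto simp: g'_def)
    also have "\<dots> = (\<Prod>j\<in>S. integral\<^sup>L NN (g j))" by (intro prod.cong) (auto simp: g'_def)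
    finally show ?thesis .
  qed
  show "integrable (PiM I (\<lambda>_. NN)) (\<lambda>\<omega>. \<Prod>j\<in>S. g j (\<omega> j))"
    using product_integrable_prod[of I g', OF fin ig'] eq by simp
  show "integral\<^sup>L (PiM I (\<lambda>_. NN)) (\<lambda>\<omega>. \<Prod>j\<in>S. g j (\<omega> j)) = (\<Prod>j\<in>S. integral\<^sup>L NN (g j))"
    using product_integral_prod[of I g', OF fin ig'] eq eq2 by simp
qed


lemma sq_sum:
  fixes f :: "'d::finite \<Rightarrow> 'a \<Rightarrow> real"
  assumes i: "\<And>k l. integrable M (\<lambda>\<omega>. f k \<omega> * f l \<omega>)"
    and v: "\<And>k l. integral\<^sup>L M (\<lambda>\<omega>. f k \<omega> * f l \<omega>) = (if k = l then c else 0)"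
  shows "integrable M (\<lambda>\<omega>. (\<Sum>k\<in>UNIV. f k \<omega>)\<^sup>2)"
    and "integral\<^sup>L M (\<lambda>\<omega>. (\<Sum>k\<in>UNIV. f k \<omega>)\<^sup>2) = c * real CARD('d)"
proof -
  have eq: "(\<lambda>\<omega>. (\<Sum>k\<in>UNIV. f k \<omega>)\<^sup>2) = (\<lambda>\<omega>. \<Sum>k\<in>UNIV. \<Sum>l\<in>UNIV. f k \<omega> * f l \<omega>)"
    by (rule ext) (simp add: power2_eq_square sum_product)
  show "integrable M (\<lambda>\<omega>. (\<Sum>k\<in>UNIV. f k \<omega>)\<^sup>2)"
    unfolding eq using i by auto
  have "integral\<^sup>L M (\<lambda>\<omega>. \<Sum>k\<in>UNIV. \<Sum>l\<in>UNIV. f k \<omega> * f l \<omega>)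
      = (\<Sum>k\<in>UNIV. \<Sum>l\<in>UNIV. integral\<^sup>L M (\<lambda>\<omega>. f k \<omega> * f l \<omega>))"
    using i by (simp add: Bochner_Integration.integral_sum integrable_sum)
  also have "\<dots> = (\<Sum>k\<in>(UNIV::'d set). c)" unfolding v by (simp add: if_distrib)
  finally show "integral\<^sup>L M (\<lambda>\<omega>. (\<Sum>k\<in>UNIV. f k \<omega>)\<^sup>2) = c * real CARD('d)"
    unfolding eq by simp
qed

context
  fixes I :: "'i set" and p q :: "'d \<Rightarrow> 'i"
  assumes fin: "finite I" and pI: "\<And>k. p k \<in> I" and qI: "\<And>k. q k \<in> I"
    and pinj: "inj p" and qinj: "inj q" and pq: "\<And>k l. p k \<noteq> q l"
begin

lemma pairA:
  shows "integrable (PiM I (\<lambda>_. NN)) (\<lambda>\<omega>. (\<omega> (p k)^2 - 1) * (\<omega> (p l)^2 - 1))"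
    and "integral\<^sup>L (PiM I (\<lambda>_. NN)) (\<lambda>\<omega>. (\<omega> (p k)^2 - 1) * (\<omega> (p l)^2 - 1)) = (if k = l then 2 else 0)"
proof -
  have "integrable (PiM I (\<lambda>_. NN)) (\<lambda>\<omega>. (\<omega> (p k)^2 - 1) * (\<omega> (p l)^2 - 1)) \<and>
     integral\<^sup>L (PiM I (\<lambda>_. NN)) (\<lambda>\<omega>. (\<omega> (p k)^2 - 1) * (\<omega> (p l)^2 - 1)) = (if k = l then 2 else 0)"
  proof (cases "k = l")
    case True
    have e: "(\<lambda>\<omega>. (\<omega> (p k)^2 - 1) * (\<omega> (p l)^2 - 1)) = (\<lambda>\<omega>. \<Prod>j\<in>{p k}. (\<lambda>x::real. (x^2-1)^2) (\<omega> j))"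
      using True by (simp add: power2_eq_square)
    show ?thesis unfolding e using prodint[OF fin, of "{p k}" "\<lambda>_ x. (x^2-1)^2"] pI c2_int c2_integral True
      by auto
  next
    case False
    then have d: "p k \<noteq> p l" using pinj by (auto dest: injD)
    have e: "(\<lambda>\<omega>. (\<omega> (p k)^2 - 1) * (\<omega> (p l)^2 - 1)) = (\<lambda>\<omega>. \<Prod>j\<in>{p k, p l}. (\<lambda>x::real. (x^2-1)) (\<omega> j))"
      using d by simp
    show ?thesis unfolding e using prodint[OF fin, of "{p k, p l}" "\<lambda>_ x. (x^2-1)"] pI c_int c_integral False d
      by auto
  qed
  then show "integrable (PiM I (\<lambda>_. NN)) (\<lambda>\<omega>. (\<omega> (p k)^2 - 1) * (\<omega> (p l)^2 - 1))"
    and "integral\<^sup>L (PiM I (\<lambda>_. NN)) (\<lambda>\<omega>. (\<omega> (p k)^2 - 1) * (\<omega> (p l)^2 - 1)) = (if k = l then 2 else 0)"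
    by auto
qed

lemma pairS:
  shows "integrable (PiM I (\<lambda>_. NN)) (\<lambda>\<omega>. \<omega> (p k) * \<omega> (p l))"
    and "integral\<^sup>L (PiM I (\<lambda>_. NN)) (\<lambda>\<omega>. \<omega> (p k) * \<omega> (p l)) = (if k = l then 1 else 0)"
proof -
  have "integrable (PiM I (\<lambda>_. NN)) (\<lambda>\<omega>. \<omega> (p k) * \<omega> (p l)) \<and>
     integral\<^sup>L (PiM I (\<lambda>_. NN)) (\<lambda>\<omega>. \<omega> (p k) * \<omega> (p l)) = (if k = l then 1 else 0)"
  proof (cases "k = l")
    case True
    have e: "(\<lambda>\<omega>. \<omega> (p k) * \<omega> (p l)) = (\<lambda>\<omega>. \<Prod>j\<in>{p k}. (\<lambda>x::real. x^2) (\<omega> j))"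
      using True by (simp add: power2_eq_square)
    show ?thesis unfolding e using prodint[OF fin, of "{p k}" "\<lambda>_ x. x^2"] pI sq_int mom2 True
      by auto
  next
    case False
    then have d: "p k \<noteq> p l" using pinj by (auto dest: injD)
    have e: "(\<lambda>\<omega>. \<omega> (p k) * \<omega> (p l)) = (\<lambda>\<omega>. \<Prod>j\<in>{p k, p l}. (\<lambda>x::real. x) (\<omega> j))"
      using d by simp
    show ?thesis unfolding e using prodint[OF fin, of "{p k, p l}" "\<lambda>_ x. x"] pI id_int mom1 False d
      by auto
  qed
  then show "integrable (PiM I (\<lambda>_. NN)) (\<lambda>\<omega>. \<omega> (p k) * \<omega> (p l))"
    and "integral\<^sup>L (PiM I (\<lambda>_. NN)) (\<lambda>\<omega>. \<omega> (p k) * \<omega> (p l)) = (if k = l then 1 else 0)"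
    by auto
qed

lemma pairB:
  shows "integrable (PiM I (\<lambda>_. NN)) (\<lambda>\<omega>. (\<omega> (p k) * \<omega> (q k)) * (\<omega> (p l) * \<omega> (q l)))"
    and "integral\<^sup>L (PiM I (\<lambda>_. NN)) (\<lambda>\<omega>. (\<omega> (p k) * \<omega> (q k)) * (\<omega> (p l) * \<omega> (q l))) = (if k = l then 1 else 0)"
proof -
  have "integrable (PiM I (\<lambda>_. NN)) (\<lambda>\<omega>. (\<omega> (p k) * \<omega> (q k)) * (\<omega> (p l) * \<omega> (q l))) \<and>
     integral\<^sup>L (PiM I (\<lambda>_. NN)) (\<lambda>\<omega>. (\<omega> (p k) * \<omega> (q k)) * (\<omega> (p l) * \<omega> (q l))) = (if k = l then 1 else 0)"
  proof (cases "k = l")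
    case True
    have d: "p k \<noteq> q k" using pq by auto
    have e: "(\<lambda>\<omega>. (\<omega> (p k) * \<omega> (q k)) * (\<omega> (p l) * \<omega> (q l))) = (\<lambda>\<omega>. \<Prod>j\<in>{p k, q k}. (\<lambda>x::real. x^2) (\<omega> j))"
      using True d by (simp add: power2_eq_square ac_simps)
    show ?thesis unfolding e using prodint[OF fin, of "{p k, q k}" "\<lambda>_ x. x^2"] pI qI sq_int mom2 True d
      by auto
  next
    case False
    then have d: "p k \<noteq> p l" "q k \<noteq> q l" using pinj qinj by (auto dest: injD)
    have d2: "p k \<noteq> q k" "p k \<noteq> q l" "p l \<noteq> q k" "p l \<noteq> q l" using pq by auto
    have e: "(\<lambda>\<omega>. (\<omega> (p k) * \<omega> (q k)) * (\<omega> (p l) * \<omega> (q l))) = (\<lambda>\<omega>. \<Prod>j\<in>{p k, q k, p l, q l}. (\<lambda>x::real. x) (\<omega> j))"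
      using d d2 by (simp add: ac_simps)
    show ?thesis unfolding e using prodint[OF fin, of "{p k, q k, p l, q l}" "\<lambda>_ x. x"] pI qI id_int mom1 False d d2
      by auto
  qed
  then show "integrable (PiM I (\<lambda>_. NN)) (\<lambda>\<omega>. (\<omega> (p k) * \<omega> (q k)) * (\<omega> (p l) * \<omega> (q l)))"
    and "integral\<^sup>L (PiM I (\<lambda>_. NN)) (\<lambda>\<omega>. (\<omega> (p k) * \<omega> (q k)) * (\<omega> (p l) * \<omega> (q l))) = (if k = l then 1 else 0)"
    by auto
qed

end


lemma cs6:
  fixes x1 x2 x3 x4 x5 x6 :: real
  shows "(x1+x2+x3+x4+x5+x6)\<^sup>2 \<le> 6*(x1\<^sup>2+x2\<^sup>2+x3\<^sup>2+x4\<^sup>2+x5\<^sup>2+x6\<^sup>2)"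
proof -
  have "6*(x1\<^sup>2+x2\<^sup>2+x3\<^sup>2+x4\<^sup>2+x5\<^sup>2+x6\<^sup>2) - (x1+x2+x3+x4+x5+x6)\<^sup>2 =
    (x1-x2)\<^sup>2+(x1-x3)\<^sup>2+(x1-x4)\<^sup>2+(x1-x5)\<^sup>2+(x1-x6)\<^sup>2+(x2-x3)\<^sup>2+(x2-x4)\<^sup>2+(x2-x5)\<^sup>2+(x2-x6)\<^sup>2
    +(x3-x4)\<^sup>2+(x3-x5)\<^sup>2+(x3-x6)\<^sup>2+(x4-x5)\<^sup>2+(x4-x6)\<^sup>2+(x5-x6)\<^sup>2"
    by (simp add: power2_eq_square algebra_simps)
  moreover have "0 \<le> (x1-x2)\<^sup>2+(x1-x3)\<^sup>2+(x1-x4)\<^sup>2+(x1-x5)\<^sup>2+(x1-x6)\<^sup>2+(x2-x3)\<^sup>2+(x2-x4)\<^sup>2+(x2-x5)\<^sup>2+(x2-x6)\<^sup>2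
    +(x3-x4)\<^sup>2+(x3-x5)\<^sup>2+(x3-x6)\<^sup>2+(x4-x5)\<^sup>2+(x4-x6)\<^sup>2+(x5-x6)\<^sup>2" by simp
  ultimately show ?thesis by linarith
qed

lemma greedy_iff:
  fixes X Xs :: "nat \<Rightarrow> real^'d::finite"
  shows "greedy X Xs 2 \<noteq> id \<longleftrightarrow> norm (X 1 - Xs 0) < norm (X 0 - Xs 0)"
proof (cases "norm (X 0 - Xs 0) \<le> norm (X 1 - Xs 0)")
  case True
  have l2: "{..<2::nat} = {0,1}" by auto
  have g1: "gr_prefix X Xs 2 1 = [0]"
    using True by (simp add: l2 Least_eq_0)
  have "gr_prefix X Xs 2 2 = [0, 1]"
  proof -
    have "gr_prefix X Xs 2 (Suc 1) = [0] @ [LEAST j. j \<in> {..<2} - set [0] \<and> (\<forall>j'\<in>{..<2} - set [0]. norm (X j - Xs 1) \<le> norm (X j' - Xs 1))]"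
      by (simp only: gr_prefix.simps(2) g1 Let_def)
    moreover have "(LEAST j. j \<in> {..<2} - set [0] \<and> (\<forall>j'\<in>{..<2} - set [0]. norm (X j - Xs 1) \<le> norm (X j' - Xs 1))) = (1::nat)"
      by (rule Least_equality) (auto simp: l2)
    ultimately have "gr_prefix X Xs 2 (Suc 1) = [0, 1]" by (simp only: append_Cons append_Nil)
    then show ?thesis by (simp only: Suc_1)
  qed
  then have "greedy X Xs 2 = id"
    by (auto simp: greedy_def fun_eq_iff less_2_cases_iff)
  then show ?thesis using True by simp
next
  case False
  have l2: "{..<2::nat} = {0,1}" by auto
  have "(LEAST j. j \<in> {0::nat, 1} \<and> (\<forall>j'\<in>{0, 1}. norm (X j - Xs 0) \<le> norm (X j' - Xs 0))) = 1"
    using False by (intro Least_equality) auto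
  then have g1: "gr_prefix X Xs 2 1 = [1]"
    by (simp add: l2)
  have "gr_prefix X Xs 2 2 = [1, 0]"
  proof -
    have "gr_prefix X Xs 2 (Suc 1) = [1] @ [LEAST j. j \<in> {..<2} - set [1] \<and> (\<forall>j'\<in>{..<2} - set [1]. norm (X j - Xs 1) \<le> norm (X j' - Xs 1))]"
      by (simp only: gr_prefix.simps(2) g1 Let_def)
    moreover have "(LEAST j. j \<in> {..<2} - set [1] \<and> (\<forall>j'\<in>{..<2} - set [1]. norm (X j - Xs 1) \<le> norm (X j' - Xs 1))) = (0::nat)"
      by (rule Least_equality) (auto simp: l2)
    ultimately have "gr_prefix X Xs 2 (Suc 1) = [1, 0]" by (simp only: append_Cons append_Nil)
    then show ?thesis by (simp only: Suc_1)
  qed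
  then have "greedy X Xs 2 0 = 1"
    by (auto simp: greedy_def)
  then have "greedy X Xs 2 \<noteq> id" by auto
  then show ?thesis using False by simp
qed


lemma sq_aux:
  fixes s x y :: real assumes "s * s = 3" shows "(s*x - s*y)\<^sup>2 = 3*(x-y)\<^sup>2"
proof -
  have "(s*x - s*y)\<^sup>2 = (s * s)*(x-y)\<^sup>2" by (simp add: power2_eq_square algebra_simps)
  then show ?thesis using assms by simp
qed

lemma sq_aux2:
  fixes s b c \<delta> :: real assumes "s * s = 3"
  shows "(\<delta> + c - s*b)\<^sup>2 = \<delta>\<^sup>2 + c\<^sup>2 + 3*b\<^sup>2 + 2*\<delta>*c - 2 * s * \<delta> * b - 2 * s * (b*c)"
proof -
  have "(\<delta> + c - s*b)\<^sup>2 = \<delta>\<^sup>2 + c\<^sup>2 + (s * s)*b\<^sup>2 + 2*\<delta>*c - 2 * s * \<delta> * b - 2 * s * (b*c)"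
    by (simp add: power2_eq_square algebra_simps)
  then show ?thesis using assms by simp
qed

lemma core:
  fixes \<delta> s :: real
  assumes s3: "s\<^sup>2 = 3" and dl: "\<delta>\<^sup>2 \<le> 2/25" and dge: "real CARD('d::finite) \<ge> 300"
  defines "M \<equiv> PiM ({..<2::nat} \<times> UNIV \<times> (UNIV::'d set)) (\<lambda>_. NN)"
  defines "Z \<equiv> \<lambda>\<omega>. \<Sum>k\<in>(UNIV::'d set). (s*\<omega> (0,False,k) - s*\<omega> (0,True,k))\<^sup>2 - (\<delta> + \<omega> (1,False,k) - s*\<omega> (0,True,k))\<^sup>2"
  shows "Z \<in> borel_measurable M" and "measure M {\<omega>\<in>space M. 0 < Z \<omega>} \<ge> 1/2"
proof -
  define I2 where "I2 = {..<2::nat} \<times> (UNIV::bool set) \<times> (UNIV::'d set)"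
  have finI: "finite I2" unfolding I2_def by auto
  interpret P: prob_space M unfolding M_def
    by (intro prob_space_PiM prob_NN)
  define pa where "pa k = (0::nat, False, k)" for k :: 'd
  define pb where "pb k = (0::nat, True, k)" for k :: 'd
  define pc where "pc k = (1::nat, False, k)" for k :: 'd
  have [measurable]: "(\<lambda>\<omega>. \<omega> (i, b, k)) \<in> borel_measurable M" if "i < 2" for i b k
  proof -
    have sN: "sets NN = sets borel" by (simp add: NN_def)
    have "(\<lambda>\<omega>. \<omega> (i, b, k)) \<in> measurable M NN"
      unfolding M_def using that by (intro measurable_component_singleton) auto
    then show ?thesis using measurable_cong_sets[OF refl sN] by blast
  qed
  show Zm[measurable]: "Z \<in> borel_measurable M" unfolding Z_def by measurable
  define d where "d = real CARD('d)"
  define TA where "TA \<omega> = (\<Sum>k\<in>UNIV. \<omega> (pa k)^2 - 1)" for \<omega> :: "nat \<times> bool \<times> 'd \<Rightarrow> real"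
  define TC where "TC \<omega> = (\<Sum>k\<in>UNIV. \<omega> (pc k)^2 - 1)" for \<omega> :: "nat \<times> bool \<times> 'd \<Rightarrow> real"
  define TB where "TB \<omega> = (\<Sum>k\<in>UNIV. \<omega> (pa k) * \<omega> (pb k))" for \<omega> :: "nat \<times> bool \<times> 'd \<Rightarrow> real"
  define TD where "TD \<omega> = (\<Sum>k\<in>UNIV. \<omega> (pb k) * \<omega> (pc k))" for \<omega> :: "nat \<times> bool \<times> 'd \<Rightarrow> real"
  define Tb where "Tb \<omega> = (\<Sum>k\<in>UNIV. \<omega> (pb k))" for \<omega> :: "nat \<times> bool \<times> 'd \<Rightarrow> real"
  define Tc where "Tc \<omega> = (\<Sum>k\<in>UNIV. \<omega> (pc k))" for \<omega> :: "nat \<times> bool \<times> 'd \<Rightarrow> real"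
  define V where "V \<omega> = 6 * (9 * (TA \<omega>)\<^sup>2 + (TC \<omega>)\<^sup>2 + 36 * (TB \<omega>)\<^sup>2 + 4*\<delta>\<^sup>2 * (Tc \<omega>)\<^sup>2
      + 12*\<delta>\<^sup>2 * (Tb \<omega>)\<^sup>2 + 12 * (TD \<omega>)\<^sup>2)" for \<omega>
  define \<mu> where "\<mu> = d * (2 - \<delta>\<^sup>2)"
  have ipa: "inj pa" "inj pb" "inj pc" unfolding pa_def pb_def pc_def by (auto intro: injI)
  have inI: "pa k \<in> I2" "pb k \<in> I2" "pc k \<in> I2" for k unfolding pa_def pb_def pc_def I2_def by auto
  have M2: "M = PiM I2 (\<lambda>_. NN)" unfolding M_def I2_def ..
  note A = pairA[OF finI inI(1) inI(3) ipa(1) ipa(3), unfolded M2[symmetric]]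
  note C = pairA[OF finI inI(3) inI(1) ipa(3) ipa(1), unfolded M2[symmetric]]
  note Sb = pairS[OF finI inI(2) inI(3) ipa(2) ipa(3), unfolded M2[symmetric]]
  note Sc = pairS[OF finI inI(3) inI(2) ipa(3) ipa(2), unfolded M2[symmetric]]
  note B = pairB[OF finI inI(1) inI(2) ipa(1) ipa(2), unfolded M2[symmetric]]
  note D = pairB[OF finI inI(2) inI(3) ipa(2) ipa(3), unfolded M2[symmetric]]
  have dist: "pa k \<noteq> pc l" "pc k \<noteq> pa l" "pb k \<noteq> pc l" "pc k \<noteq> pb l" "pa k \<noteq> pb l" for k l
    unfolding pa_def pb_def pc_def by auto
  note sqA = sq_sum[of M "\<lambda>k \<omega>. \<omega> (pa k)^2 - 1" 2, OF A[OF dist(1)], folded TA_def]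
  note sqC = sq_sum[of M "\<lambda>k \<omega>. \<omega> (pc k)^2 - 1" 2, OF C[OF dist(2)], folded TC_def]
  note sqb = sq_sum[of M "\<lambda>k \<omega>. \<omega> (pb k)" 1, OF Sb[OF dist(3)], folded Tb_def]
  note sqc = sq_sum[of M "\<lambda>k \<omega>. \<omega> (pc k)" 1, OF Sc[OF dist(4)], folded Tc_def]
  note sqB = sq_sum[of M "\<lambda>k \<omega>. \<omega> (pa k) * \<omega> (pb k)" 1, OF B[OF dist(5)], folded TB_def]
  note sqD = sq_sum[of M "\<lambda>k \<omega>. \<omega> (pb k) * \<omega> (pc k)" 1, OF D[OF dist(3)], folded TD_def]
  have intV: "integrable M V" unfolding V_def
    using sqA(1) sqC(1) sqb(1) sqc(1) sqB(1) sqD(1) by auto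
  have EV: "integral\<^sup>L M V = 6 * d * (68 + 16 * \<delta>\<^sup>2)" unfolding V_def
    using sqA sqC sqb sqc sqB sqD
    by (simp add: Bochner_Integration.integral_add d_def algebra_simps)
  have Wid: "Z \<omega> - \<mu> = 3*TA \<omega> - TC \<omega> - 6*TB \<omega> - 2 * \<delta> * Tc \<omega> + 2 * s * \<delta>*Tb \<omega> + 2 * s * TD \<omega>" for \<omega>
  proof -
    have per: "(s*\<omega> (pa k) - s*\<omega> (pb k))\<^sup>2 - (\<delta> + \<omega> (pc k) - s*\<omega> (pb k))\<^sup>2 - (2 - \<delta>\<^sup>2)
      = 3*(\<omega> (pa k)^2 - 1) - (\<omega> (pc k)^2 - 1) - 6*(\<omega> (pa k) * \<omega> (pb k)) - 2 * \<delta> * \<omega> (pc k)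
        + 2 * s * \<delta>*\<omega> (pb k) + 2 * s * (\<omega> (pb k) * \<omega> (pc k))" for k
    proof -
      have ss: "s * s = 3" using s3 by (simp add: power2_eq_square)
      show ?thesis unfolding sq_aux[OF ss, of "\<omega> (pa k)" "\<omega> (pb k)"] sq_aux2[OF ss, of \<delta> "\<omega> (pc k)" "\<omega> (pb k)"] by (simp add: power2_eq_square algebra_simps)
    qed
    have "Z \<omega> - \<mu> = (\<Sum>k\<in>UNIV. (s*\<omega> (pa k) - s*\<omega> (pb k))\<^sup>2 - (\<delta> + \<omega> (pc k) - s*\<omega> (pb k))\<^sup>2 - (2 - \<delta>\<^sup>2))"
      unfolding Z_def \<mu>_def d_def pa_def pb_def pc_def by (simp add: sum_subtractf)
    also have "\<dots> = (\<Sum>k\<in>UNIV. 3*(\<omega> (pa k)^2 - 1) - (\<omega> (pc k)^2 - 1) - 6*(\<omega> (pa k) * \<omega> (pb k)) - 2 * \<delta> * \<omega> (pc k)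
        + 2 * s * \<delta>*\<omega> (pb k) + 2 * s * (\<omega> (pb k) * \<omega> (pc k)))"
      by (rule sum.cong[OF refl]) (rule per)
    also have "\<dots> = 3*TA \<omega> - TC \<omega> - 6*TB \<omega> - 2 * \<delta> * Tc \<omega> + 2 * s * \<delta>*Tb \<omega> + 2 * s * TD \<omega>"
      unfolding TA_def TB_def TC_def TD_def Tb_def Tc_def
      by (simp add: sum.distrib sum_subtractf sum_distrib_left)
    finally show ?thesis .
  qed
  have Vge: "(Z \<omega> - \<mu>)\<^sup>2 \<le> V \<omega>" for \<omega>
  proof -
    have "(Z \<omega> - \<mu>)\<^sup>2 \<le> 6*((3*TA \<omega>)\<^sup>2 + (- TC \<omega>)\<^sup>2 + (- 6*TB \<omega>)\<^sup>2 + (- 2 * \<delta> * Tc \<omega>)\<^sup>2 + (2 * s * \<delta>*Tb \<omega>)\<^sup>2 + (2 * s * TD \<omega>)\<^sup>2)"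
      unfolding Wid using cs6[of "3*TA \<omega>" "- TC \<omega>" "- 6*TB \<omega>" "- 2 * \<delta> * Tc \<omega>" "2 * s * \<delta>*Tb \<omega>" "2 * s * TD \<omega>"]
      by simp
    also have "\<dots> = V \<omega>" unfolding V_def by (simp add: power_mult_distrib s3)
    finally show ?thesis .
  qed
  have dpos: "d \<ge> 300" using dge d_def by simp
  have t2: "2 - \<delta>\<^sup>2 \<ge> 48/25" using dl by simp
  have mupos: "\<mu> > 0" unfolding \<mu>_def using dpos t2 by simp
  define F where "F = {\<omega>\<in>space M. Z \<omega> \<le> 0}"
  have Fm: "F \<in> P.events" unfolding F_def by measurable
  have sub: "F \<subseteq> {\<omega>\<in>space M. V \<omega> \<ge> \<mu>\<^sup>2}"
  proof
    fix \<omega> assume "\<omega> \<in> F"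
    then have "\<omega> \<in> space M" "Z \<omega> \<le> 0" unfolding F_def by auto
    then have "\<mu> \<le> \<bar>Z \<omega> - \<mu>\<bar>" using mupos by simp
    then have "\<mu>\<^sup>2 \<le> (Z \<omega> - \<mu>)\<^sup>2" using mupos
      by (metis abs_of_pos power2_abs power_mono less_imp_le)
    then show "\<omega> \<in> {\<omega>\<in>space M. V \<omega> \<ge> \<mu>\<^sup>2}" using Vge[of \<omega>] \<open>\<omega> \<in> space M\<close> by auto
  qed
  have Vm[measurable]: "V \<in> borel_measurable M"
    unfolding V_def TA_def TB_def TC_def TD_def Tb_def Tc_def pa_def pb_def pc_def by measurable
  have "P.prob F \<le> P.prob {\<omega>\<in>space M. V \<omega> \<ge> \<mu>\<^sup>2}"
    by (rule P.finite_measure_mono[OF sub]) measurable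
  also have "\<dots> \<le> integral\<^sup>L M V / \<mu>\<^sup>2"
    by (rule integral_Markov_inequality_measure[OF intV, of "space M"])
       (use mupos in \<open>auto simp: V_def\<close>)
  also have "\<dots> \<le> 1/2"
  proof -
    have "integral\<^sup>L M V = 6 * d * (68 + 16 * \<delta>\<^sup>2)" by (rule EV)
    also have "\<dots> \<le> 6 * d * (68 + 16 * (2/25))" using dl dpos by simp
    also have "\<dots> \<le> d * (d * (48/25)^2) / 2" using dpos by (simp add: power2_eq_square)
    also have "\<dots> \<le> d * (d * (2 - \<delta>\<^sup>2)^2) / 2"
      using t2 dpos by (intro divide_right_mono mult_left_mono power_mono) auto
    also have "\<dots> = \<mu>\<^sup>2 / 2" unfolding \<mu>_def by (simp add: power2_eq_square)
    finally show ?thesis using mupos by (simp add: divide_simps)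
  qed
  finally have PF: "P.prob F \<le> 1/2" .
  have "{\<omega>\<in>space M. 0 < Z \<omega>} = space M - F" unfolding F_def by auto
  then show "measure M {\<omega>\<in>space M. 0 < Z \<omega>} \<ge> 1/2"
    using P.prob_compl[OF Fm] PF by simp
qed

lemma norm_vec_sq: "norm (v::real^'d::finite) = sqrt (\<Sum>k\<in>UNIV. (v$k)\<^sup>2)"
  by (simp add: norm_vec_def L2_set_def)

lemma ln6: "225 * ln (6::real) \<ge> 300"
proof -
  have "exp (4::real) = exp 1 ^ 4" by (simp add: exp_of_nat_mult[symmetric])
  also have "\<dots> \<le> 3 ^ 4" by (intro power_mono exp_le) auto
  also have "\<dots> \<le> (6::real) ^ 3" by simp
  finally have "4 \<le> ln ((6::real)^3)" by (subst ln_ge_iff) auto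
  then have "4 \<le> 3 * ln (6::real)" using ln_realpow[of "6::real" 3] by simp
  then show ?thesis by simp
qed

theorem theorem5:
  fixes \<sigma> :: "nat \<Rightarrow> real" and \<kappa> :: real
  assumes "real CARD('d::finite) \<ge> 225 * ln 6"
    and "\<sigma> 0 > 0" and "\<sigma> 1 > 0" and "(\<sigma> 0)\<^sup>2 = 3" and "(\<sigma> 1)\<^sup>2 = 1"
    and "\<kappa> < 0.1 * sqrt (2 * real CARD('d))"
  shows "(SUP \<theta> \<in> {\<theta> :: nat \<Rightarrow> real^'d. kappa_bar 2 \<theta> \<sigma> \<ge> \<kappa>}.
            Prob 2 \<theta> \<sigma> id (\<lambda>X Xs. greedy X Xs 2 \<noteq> id)) \<ge> 1 / 2"
proof -
  define s where "s = \<sigma> 0"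
  have s3: "s\<^sup>2 = 3" using assms(4) s_def by simp
  have s1: "\<sigma> 1 = 1" using assms(3,5) by (simp add: power2_eq_1_iff) 
  have s1': "\<sigma> (Suc 0) = 1" using s1 by simp
  define d where "d = real CARD('d)"
  have dge: "d \<ge> 300" using assms(1) ln6 d_def by linarith
  define mk where "mk = max \<kappa> 0"
  define \<delta> where "\<delta> = 2 * mk / sqrt d"
  have sd: "sqrt d > 0" using dge by simp
  have dl: "\<delta>\<^sup>2 \<le> 2/25"
  proof (cases "\<kappa> \<le> 0")
    case True then show ?thesis by (simp add: \<delta>_def mk_def)
  next
    case False
    then have "mk = \<kappa>" "\<kappa> > 0" by (auto simp: mk_def)
    have "\<kappa>\<^sup>2 \<le> (0.1 * sqrt (2 * d))\<^sup>2"
      using assms(6) \<open>\<kappa> > 0\<close> d_def by (intro power_mono) auto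
    also have "\<dots> = 0.02 * d" using dge by (simp add: power_divide)
    finally have k2: "\<kappa>\<^sup>2 \<le> 0.02 * d" .
    have "\<delta>\<^sup>2 = 4 * \<kappa>\<^sup>2 / d" using dge \<open>mk = \<kappa>\<close>
      by (simp add: \<delta>_def power_divide power_mult_distrib)
    also have "\<dots> \<le> 4 * (0.02 * d) / d" using k2 dge by (intro divide_right_mono) auto
    also have "\<dots> = 2/25" using dge by simp
    finally show ?thesis .
  qed
  define \<theta> where "\<theta> = (\<lambda>i::nat. if i = 1 then (\<chi> k::'d. \<delta>) else 0)"
  have kb: "kappa_bar 2 \<theta> \<sigma> \<ge> \<kappa>"
  proof -
    have nv: "norm (\<chi> k::'d. \<delta>) = 2 * mk"
    proof -
      have "norm (\<chi> k::'d. \<delta>) = sqrt (d * \<delta>\<^sup>2)" by (simp add: norm_vec_sq d_def)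
      also have "\<dots> = \<bar>\<delta>\<bar> * sqrt d" using dge by (simp add: real_sqrt_mult mult.commute)
      also have "\<dots> = 2 * mk" using sd by (simp add: \<delta>_def mk_def)
      finally show ?thesis .
    qed
    have sq4: "sqrt ((\<sigma> 0)\<^sup>2 + (\<sigma> 1)\<^sup>2) = 2" using assms(4,5) by simp
    have sq4': "sqrt ((\<sigma> 1)\<^sup>2 + (\<sigma> 0)\<^sup>2) = 2" using assms(4,5) by simp
    have "{norm (\<theta> i - \<theta> j) / sqrt ((\<sigma> i)\<^sup>2 + (\<sigma> j)\<^sup>2) | i j. i < 2 \<and> j < 2 \<and> i \<noteq> j} = {mk}"
    proof -
      have "{norm (\<theta> i - \<theta> j) / sqrt ((\<sigma> i)\<^sup>2 + (\<sigma> j)\<^sup>2) | i j. i < 2 \<and> j < 2 \<and> i \<noteq> j}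
        = {norm (\<theta> 0 - \<theta> 1) / sqrt ((\<sigma> 0)\<^sup>2 + (\<sigma> 1)\<^sup>2), norm (\<theta> 1 - \<theta> 0) / sqrt ((\<sigma> 1)\<^sup>2 + (\<sigma> 0)\<^sup>2)}"
        (is "?L = ?R")
      proof (intro equalityI subsetI)
        fix x assume "x \<in> ?L"
        then obtain i j where x: "x = norm (\<theta> i - \<theta> j) / sqrt ((\<sigma> i)\<^sup>2 + (\<sigma> j)\<^sup>2)"
          and ij: "i < 2" "j < 2" "i \<noteq> j" by blast
        from ij have "(i = 0 \<and> j = 1) \<or> (i = 1 \<and> j = (0::nat))" by auto
        then show "x \<in> ?R" using x by auto
      next
        fix x assume "x \<in> ?R"
        then have "x = norm (\<theta> 0 - \<theta> 1) / sqrt ((\<sigma> 0)\<^sup>2 + (\<sigma> 1)\<^sup>2) \<or> x = norm (\<theta> 1 - \<theta> 0) / sqrt ((\<sigma> 1)\<^sup>2 + (\<sigma> 0)\<^sup>2)"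
          by simp
        then show "x \<in> ?L"
        proof
          assume "x = norm (\<theta> 0 - \<theta> 1) / sqrt ((\<sigma> 0)\<^sup>2 + (\<sigma> 1)\<^sup>2)"
          then show "x \<in> ?L" by (intro CollectI exI[of _ 0] exI[of _ 1]) auto
        next
          assume "x = norm (\<theta> 1 - \<theta> 0) / sqrt ((\<sigma> 1)\<^sup>2 + (\<sigma> 0)\<^sup>2)"
          then show "x \<in> ?L" by (intro CollectI exI[of _ 1] exI[of _ 0]) auto
        qed
      qed
      also have "\<dots> = {mk}" unfolding sq4 sq4' by (simp add: \<theta>_def nv)
      finally show ?thesis .
    qed
    then show ?thesis unfolding kappa_bar_def mk_def by simp
  qed
  define M where "M = PiM ({..<2::nat} \<times> (UNIV::bool set) \<times> (UNIV::'d set)) (\<lambda>_. NN)"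
  define Z where "Z = (\<lambda>\<omega>::nat \<times> bool \<times> 'd \<Rightarrow> real. \<Sum>k\<in>(UNIV::'d set). (s*\<omega> (0,False,k) - s*\<omega> (0,True,k))\<^sup>2 - (\<delta> + \<omega> (1,False,k) - s*\<omega> (0,True,k))\<^sup>2)"
  have core': "measure M {\<omega>\<in>space M. 0 < Z \<omega>} \<ge> 1/2"
    using core(2)[OF s3 dl, where 'd='d] dge d_def unfolding M_def Z_def by simp
  have NS: "noise_space 2 = M" unfolding noise_space_def M_def NN_def ..
  interpret P: prob_space M unfolding M_def by (intro prob_space_PiM prob_NN)
  have ev: "(greedy (obsX \<theta> \<sigma> \<omega>) (obsXs \<theta> \<sigma> id \<omega>) 2 \<noteq> id) \<longleftrightarrow> 0 < Z \<omega>" for \<omega>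
  proof -
    have c1: "(obsX \<theta> \<sigma> \<omega> 1 - obsXs \<theta> \<sigma> id \<omega> 0) $ k = \<delta> + \<omega> (1,False,k) - s*\<omega> (0,True,k)" for k
      by (simp add: obsX_def obsXs_def \<theta>_def xi_def xi_sharp_def s1 s_def s1')
    have c0: "(obsX \<theta> \<sigma> \<omega> 0 - obsXs \<theta> \<sigma> id \<omega> 0) $ k = s*\<omega> (0,False,k) - s*\<omega> (0,True,k)" for k
      by (simp add: obsX_def obsXs_def \<theta>_def xi_def xi_sharp_def s_def)
    show ?thesis unfolding greedy_iff norm_vec_sq c1 c0 real_sqrt_less_iff Z_def sum_subtractf by linarith

  qed
  have PE: "Prob 2 \<theta> \<sigma> id (\<lambda>X Xs. greedy X Xs 2 \<noteq> id) = measure M {\<omega>\<in>space M. 0 < Z \<omega>}"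
    unfolding Prob_def NS ev ..
  have bdd: "bdd_above ((\<lambda>\<theta>. Prob 2 \<theta> \<sigma> id (\<lambda>X Xs. greedy X Xs 2 \<noteq> id)) ` {\<theta> :: nat \<Rightarrow> real^'d. kappa_bar 2 \<theta> \<sigma> \<ge> \<kappa>})"
    by (rule bdd_aboveI[where M=1]) (auto simp: Prob_def NS)
  show ?thesis
    by (rule cSUP_upper2[OF bdd, of \<theta>]) (use kb PE core' in auto)
qed

end
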